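(* For every subset $I$ of $\mathbb{N}$, the monoid $M_I=\langle a,b,c,d \mid ab^ic=ab^id \ (i\in I)\rangle$ is a finitely generated strongly $0$-hyperbolic monoid.
   Context: Directed graphs may have loops and multiple edges; $d(u,v)$ is the length of a shortest directed path from $u$ to $v$ ($\infty$ if none). Out-ball $\overrightarrow{\mathcal{B}}_r(x)=\{y : d(x,y)\le r\}$, in-ball $\overleftarrow{\mathcal{B}}_r(x)=\{y : d(y,x)\le r\}$, extended to sets by union. A path $[x_0,\dots,x_n]$ is a geodesic if $n=d(x_0,x_n)$. A directed geodesic triangle is an ordered triple $(p,q,r)$ of geodesics with the end of $p$ equal to the start of $q$ and $p\circ q$ having the same start and end as $r$; it is $0$-thin if every vertex of $r$ lies in $\overrightarrow{\mathcal{B}}_0(p)\cup\overleftarrow{\mathcal{B}}_0(q)$, every vertex of $p$ lies in $\overrightarrow{\mathcal{B}}_0(r)\cup\overleftarrow{\mathcal{B}}_0(q)$, and every vertex of $q$ lies in $\overrightarrow{\mathcal{B}}_0(p)\cup\overleftarrow{\mathcal{B}}_0(r)$. A monoid is strongly $0$-hyperbolic if its right Cayley graph w.r.t. some finite generating set $A$ (vertex set the monoid, edge $m\to n$ for each $a\in A$ with $ma=n$) has all directed geodesic triangles $0$-thin. *)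

theory Defs
  imports "HOL-Algebra.Group" "HOL-Library.Extended_Nat"
begin

text \<open>Multiple edges do not affect vertex paths or distances, so the graph is
  represented by its (loop-allowing) edge relation.\<close>

definition cayley_edge :: "('a,'b) monoid_scheme \<Rightarrow> 'a set \<Rightarrow> 'a \<Rightarrow> 'a \<Rightarrow> bool" where
  "cayley_edge G A m n \<longleftrightarrow> m \<in> carrier G \<and> n \<in> carrier G \<and> (\<exists>a\<in>A. m \<otimes>\<^bsub>G\<^esub> a = n)"

definition cayley_path :: "('a,'b) monoid_scheme \<Rightarrow> 'a set \<Rightarrow> 'a list \<Rightarrow> bool" where
  "cayley_path G A xs \<longleftrightarrow> xs \<noteq> [] \<and> set xs \<subseteq> carrier G \<and>
     (\<forall>i. Suc i < length xs \<longrightarrow> cayley_edge G A (xs ! i) (xs ! Suc i))"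

text \<open>Directed distance (infinity if there is no path).\<close>
definition cdist :: "('a,'b) monoid_scheme \<Rightarrow> 'a set \<Rightarrow> 'a \<Rightarrow> 'a \<Rightarrow> enat" where
  "cdist G A u v = (INF xs \<in> {xs. cayley_path G A xs \<and> hd xs = u \<and> last xs = v}. enat (length xs - 1))"

definition out_ball :: "('a,'b) monoid_scheme \<Rightarrow> 'a set \<Rightarrow> enat \<Rightarrow> 'a set \<Rightarrow> 'a set" where
  "out_ball G A r S = {y \<in> carrier G. \<exists>x\<in>S. cdist G A x y \<le> r}"

definition in_ball :: "('a,'b) monoid_scheme \<Rightarrow> 'a set \<Rightarrow> enat \<Rightarrow> 'a set \<Rightarrow> 'a set" where
  "in_ball G A r S = {y \<in> carrier G. \<exists>x\<in>S. cdist G A y x \<le> r}"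

definition geodesic :: "('a,'b) monoid_scheme \<Rightarrow> 'a set \<Rightarrow> 'a list \<Rightarrow> bool" where
  "geodesic G A xs \<longleftrightarrow> cayley_path G A xs \<and> enat (length xs - 1) = cdist G A (hd xs) (last xs)"

definition geodesic_triangle :: "('a,'b) monoid_scheme \<Rightarrow> 'a set \<Rightarrow> 'a list \<Rightarrow> 'a list \<Rightarrow> 'a list \<Rightarrow> bool" where
  "geodesic_triangle G A p q r \<longleftrightarrow> geodesic G A p \<and> geodesic G A q \<and> geodesic G A r \<and>
     last p = hd q \<and> hd r = hd p \<and> last r = last q"

definition thin_triangle :: "('a,'b) monoid_scheme \<Rightarrow> 'a set \<Rightarrow> enat \<Rightarrow> 'a list \<Rightarrow> 'a list \<Rightarrow> 'a list \<Rightarrow> bool" where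
  "thin_triangle G A \<delta> p q r \<longleftrightarrow>
     set r \<subseteq> out_ball G A \<delta> (set p) \<union> in_ball G A \<delta> (set q) \<and>
     set p \<subseteq> out_ball G A \<delta> (set r) \<union> in_ball G A \<delta> (set q) \<and>
     set q \<subseteq> out_ball G A \<delta> (set p) \<union> in_ball G A \<delta> (set r)"

inductive_set monoid_span :: "('a,'b) monoid_scheme \<Rightarrow> 'a set \<Rightarrow> 'a set" for G A where
  one: "\<one>\<^bsub>G\<^esub> \<in> monoid_span G A"
| step: "x \<in> monoid_span G A \<Longrightarrow> a \<in> A \<Longrightarrow> x \<otimes>\<^bsub>G\<^esub> a \<in> monoid_span G A"

definition generates :: "('a,'b) monoid_scheme \<Rightarrow> 'a set \<Rightarrow> bool" where
  "generates G A \<longleftrightarrow> A \<subseteq> carrier G \<and> carrier G \<subseteq> monoid_span G A"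

definition finitely_generated :: "('a,'b) monoid_scheme \<Rightarrow> bool" where
  "finitely_generated G \<longleftrightarrow> (\<exists>A. finite A \<and> generates G A)"

definition strongly_hyperbolic :: "('a,'b) monoid_scheme \<Rightarrow> enat \<Rightarrow> bool" where
  "strongly_hyperbolic G \<delta> \<longleftrightarrow> (\<exists>A. finite A \<and> generates G A \<and>
     (\<forall>p q r. geodesic_triangle G A p q r \<longrightarrow> thin_triangle G A \<delta> p q r))"

datatype gen4 = ga | gb | gc | gd

inductive_set MI_cong :: "nat set \<Rightarrow> (gen4 list \<times> gen4 list) set" for I where
  rel: "i \<in> I \<Longrightarrow> (ga # replicate i gb @ [gc], ga # replicate i gb @ [gd]) \<in> MI_cong I"
| refl: "(u, u) \<in> MI_cong I"
| sym: "(u, v) \<in> MI_cong I \<Longrightarrow> (v, u) \<in> MI_cong I"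
| trans: "(u, v) \<in> MI_cong I \<Longrightarrow> (v, w) \<in> MI_cong I \<Longrightarrow> (u, w) \<in> MI_cong I"
| ctx: "(u, v) \<in> MI_cong I \<Longrightarrow> (x @ u @ y, x @ v @ y) \<in> MI_cong I"

definition M_I :: "nat set \<Rightarrow> gen4 list set monoid" where
  "M_I I = \<lparr> carrier = UNIV // MI_cong I,
            mult = (\<lambda>X Y. {w. \<exists>u\<in>X. \<exists>v\<in>Y. (u @ v, w) \<in> MI_cong I}),
            one = MI_cong I `` {[]} \<rparr>"

end

theory Submission
  imports Defs
begin

lemma cong_props:
  "(u, v) \<in> MI_cong I \<Longrightarrow> length u = length v \<and> (butlast u, butlast v) \<in> MI_cong I"
proof (induction rule: MI_cong.induct)
  case (rel i)
  then show ?case by (simp add: butlast_append MI_cong.refl)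
next
  case (refl u) then show ?case by (simp add: MI_cong.refl)
next
  case (sym u v) then show ?case by (simp add: MI_cong.sym)
next
  case (trans u v w) then show ?case by (metis MI_cong.trans)
next
  case (ctx u v x y)
  show ?case
  proof (cases "y = []")
    case True
    then show ?thesis using ctx MI_cong.ctx[of "butlast u" "butlast v" I x "[]"]
      by (auto simp: butlast_append MI_cong.refl)
  next
    case False
    then show ?thesis using ctx MI_cong.ctx[of u v I x "butlast y"]
      by (auto simp: butlast_append)
  qed
qed

lemma equiv_MI: "equiv UNIV (MI_cong I)"
  unfolding equiv_def refl_on_def sym_def trans_def
  by (simp add: MI_cong.refl) (metis MI_cong.sym MI_cong.trans)

lemma cls_eq: "MI_cong I `` {u} = MI_cong I `` {v} \<longleftrightarrow> (u, v) \<in> MI_cong I"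
  using eq_equiv_class_iff[OF equiv_MI] by blast

lemma app_cong: "(u, u') \<in> MI_cong I \<Longrightarrow> (v, v') \<in> MI_cong I \<Longrightarrow> (u @ v, u' @ v') \<in> MI_cong I"
  using MI_cong.ctx[of u u' I "[]" v] MI_cong.ctx[of v v' I u' "[]"]
  by (auto intro: MI_cong.trans)

lemma mult_cls:
  "mult (M_I I) (MI_cong I `` {u}) (MI_cong I `` {v}) = MI_cong I `` {u @ v}"
  unfolding M_I_def
  by (auto intro: MI_cong.trans app_cong MI_cong.refl)

lemma carrier_MI: "carrier (M_I I) = UNIV // MI_cong I"
  by (simp add: M_I_def)

lemma one_MI: "one (M_I I) = MI_cong I `` {[]}"
  by (simp add: M_I_def)

lemma monoid_MI: "monoid (M_I I)"
proof (rule monoidI)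
  fix x y assume "x \<in> carrier (M_I I)" "y \<in> carrier (M_I I)"
  then show "x \<otimes>\<^bsub>M_I I\<^esub> y \<in> carrier (M_I I)"
    by (auto simp: carrier_MI mult_cls elim!: quotientE intro: quotientI[OF UNIV_I])
next
  show "\<one>\<^bsub>M_I I\<^esub> \<in> carrier (M_I I)" by (simp add: carrier_MI one_MI quotientI)
next
  fix x y z assume "x \<in> carrier (M_I I)" "y \<in> carrier (M_I I)" "z \<in> carrier (M_I I)"
  then show "x \<otimes>\<^bsub>M_I I\<^esub> y \<otimes>\<^bsub>M_I I\<^esub> z = x \<otimes>\<^bsub>M_I I\<^esub> (y \<otimes>\<^bsub>M_I I\<^esub> z)"
    by (auto simp: carrier_MI mult_cls elim!: quotientE)
next
  fix x assume "x \<in> carrier (M_I I)"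
  then show "\<one>\<^bsub>M_I I\<^esub> \<otimes>\<^bsub>M_I I\<^esub> x = x"
    by (auto simp: carrier_MI mult_cls one_MI elim!: quotientE)
next
  fix x assume "x \<in> carrier (M_I I)"
  then show "x \<otimes>\<^bsub>M_I I\<^esub> \<one>\<^bsub>M_I I\<^esub> = x"
    by (auto simp: carrier_MI mult_cls one_MI elim!: quotientE)
qed

definition gensI :: "nat set \<Rightarrow> gen4 list set set" where
  "gensI I = (\<lambda>x. MI_cong I `` {[x]}) ` {ga, gb, gc, gd}"

lemma span_cls: "MI_cong I `` {w} \<in> monoid_span (M_I I) (gensI I)"
proof (induction w rule: rev_induct)
  case Nil
  then show ?case using monoid_span.one[of "M_I I" "gensI I"] by (simp add: one_MI)
next
  case (snoc x xs)
  have "MI_cong I `` {[x]} \<in> gensI I" by (cases x) (auto simp: gensI_def)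
  from monoid_span.step[OF snoc this] show ?case by (simp add: mult_cls)
qed

lemma generates_MI: "generates (M_I I) (gensI I)"
  unfolding generates_def
proof
  show "gensI I \<subseteq> carrier (M_I I)" by (auto simp: gensI_def carrier_MI quotientI)
  show "carrier (M_I I) \<subseteq> monoid_span (M_I I) (gensI I)"
  proof
    fix X assume "X \<in> carrier (M_I I)"
    then obtain w where "X = MI_cong I `` {w}" by (auto simp: carrier_MI elim!: quotientE)
    then show "X \<in> monoid_span (M_I I) (gensI I)" using span_cls by simp
  qed
qed

lemma finite_gens: "finite (gensI I)" by (simp add: gensI_def)

definition lenI :: "gen4 list set \<Rightarrow> nat" where
  "lenI X = length (SOME w. w \<in> X)"

lemma lenI_cls: "lenI (MI_cong I `` {u}) = length u"
proof -
  have "u \<in> MI_cong I `` {u}" by (simp add: MI_cong.refl)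
  then have "(SOME w. w \<in> MI_cong I `` {u}) \<in> MI_cong I `` {u}" by (rule someI)
  then show ?thesis using cong_props by (auto simp: lenI_def)
qed

lemma edge_cls:
  assumes "cayley_edge (M_I I) (gensI I) m n"
  obtains u x where "m = MI_cong I `` {u}" "n = MI_cong I `` {u @ [x]}"
proof -
  from assms obtain a where m: "m \<in> carrier (M_I I)" and a: "a \<in> gensI I"
    and n: "m \<otimes>\<^bsub>M_I I\<^esub> a = n" unfolding cayley_edge_def by blast
  from m obtain u where u: "m = MI_cong I `` {u}" by (auto simp: carrier_MI elim!: quotientE)
  from a obtain x where x: "a = MI_cong I `` {[x]}" by (auto simp: gensI_def)
  have "n = MI_cong I `` {u @ [x]}" using n u x by (simp add: mult_cls)
  then show ?thesis using u that by blast
qed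

lemma edge_len: "cayley_edge (M_I I) (gensI I) m n \<Longrightarrow> lenI n = Suc (lenI m)"
  by (erule edge_cls) (simp add: lenI_cls)

lemma edge_uniq: "cayley_edge (M_I I) (gensI I) m n \<Longrightarrow> cayley_edge (M_I I) (gensI I) m' n \<Longrightarrow> m = m'"
proof -
  assume e1: "cayley_edge (M_I I) (gensI I) m n" and e2: "cayley_edge (M_I I) (gensI I) m' n"
  obtain u x where u: "m = MI_cong I `` {u}" "n = MI_cong I `` {u @ [x]}" using e1 by (rule edge_cls)
  obtain v y where v: "m' = MI_cong I `` {v}" "n = MI_cong I `` {v @ [y]}" using e2 by (rule edge_cls)
  have "(u @ [x], v @ [y]) \<in> MI_cong I" using u v cls_eq by metis
  then have "(u, v) \<in> MI_cong I" using cong_props by fastforce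
  then show ?thesis using u v cls_eq by metis
qed

lemma path_nth:
  assumes E2: "\<And>m n. cayley_edge G A m n \<Longrightarrow> f n = Suc (f m)"
    and p: "cayley_path G A xs"
  shows "i < length xs \<Longrightarrow> f (xs ! i) = f (hd xs) + i"
proof (induction i)
  case 0 then show ?case using p by (simp add: cayley_path_def hd_conv_nth)
next
  case (Suc i)
  then have "cayley_edge G A (xs ! i) (xs ! Suc i)" using p by (simp add: cayley_path_def)
  then show ?case using Suc E2 by simp
qed

lemma path_unique:
  assumes E1: "\<And>m m' n. cayley_edge G A m n \<Longrightarrow> cayley_edge G A m' n \<Longrightarrow> m = m'"
    and E2: "\<And>m n. cayley_edge G A m n \<Longrightarrow> f n = Suc (f m)"
    and px: "cayley_path G A xs" and py: "cayley_path G A ys"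
    and h: "hd xs = hd ys" and l: "last xs = last ys"
  shows "xs = ys"
proof -
  have nx: "xs \<noteq> []" and ny: "ys \<noteq> []" using px py by (auto simp: cayley_path_def)
  have "f (last xs) = f (hd xs) + (length xs - 1)"
    using path_nth[OF E2 px, where i="length xs - 1"] nx by (simp add: last_conv_nth)
  moreover have "f (last ys) = f (hd ys) + (length ys - 1)"
    using path_nth[OF E2 py, where i="length ys - 1"] ny by (simp add: last_conv_nth)
  ultimately have "length xs - 1 = length ys - 1" using h l by simp
  moreover have "length xs > 0" "length ys > 0" using nx ny by auto
  ultimately have len: "length xs = length ys" by linarith
  define n where "n = length xs - 1"
  have bk: "k \<le> n \<Longrightarrow> xs ! (n - k) = ys ! (n - k)" for k
  proof (induction k)
    case 0 then show ?case using l nx ny len by (simp add: n_def last_conv_nth)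
  next
    case (Suc k)
    then have "cayley_edge G A (xs ! (n - Suc k)) (xs ! Suc (n - Suc k))"
      "cayley_edge G A (ys ! (n - Suc k)) (ys ! Suc (n - Suc k))"
      using px py len nx unfolding cayley_path_def n_def by auto
    moreover have sk: "Suc (n - Suc k) = n - k" using Suc.prems by simp
    moreover have "xs ! (n - k) = ys ! (n - k)" using Suc by simp
    ultimately show ?case using E1 by (metis sk)
  qed
  show ?thesis
  proof (rule nth_equalityI)
    show "length xs = length ys" by (rule len)
    fix i assume "i < length xs"
    then have "i = n - (n - i)" "n - i \<le> n" by (auto simp: n_def)
    then show "xs ! i = ys ! i" using bk by metis
  qed
qed

lemma path_Cons2:
  "cayley_path G A (x # y # zs) \<longleftrightarrow> cayley_edge G A x y \<and> cayley_path G A (y # zs)"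
proof
  assume a: "cayley_path G A (x # y # zs)"
  have all: "\<And>i. Suc i < length (x # y # zs) \<Longrightarrow> cayley_edge G A ((x # y # zs) ! i) ((x # y # zs) ! Suc i)"
    using a unfolding cayley_path_def by blast
  have c: "set (x # y # zs) \<subseteq> carrier G" using a unfolding cayley_path_def by blast
  have e: "cayley_edge G A x y" using all[of 0] by simp
  have "cayley_path G A (y # zs)"
    unfolding cayley_path_def
  proof (intro conjI allI impI)
    fix i assume "Suc i < length (y # zs)"
    then have "Suc (Suc i) < length (x # y # zs)" by simp
    from all[OF this] show "cayley_edge G A ((y # zs) ! i) ((y # zs) ! Suc i)" by simp
  next
    show "y # zs \<noteq> []" by simp
    show "set (y # zs) \<subseteq> carrier G" using c by simp
  qed
  with e show "cayley_edge G A x y \<and> cayley_path G A (y # zs)" by blast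
next
  assume a: "cayley_edge G A x y \<and> cayley_path G A (y # zs)"
  have all: "\<And>i. Suc i < length (y # zs) \<Longrightarrow> cayley_edge G A ((y # zs) ! i) ((y # zs) ! Suc i)"
    using a unfolding cayley_path_def by blast
  have c: "set (y # zs) \<subseteq> carrier G" using a unfolding cayley_path_def by blast
  have xc: "x \<in> carrier G" using a unfolding cayley_edge_def by blast
  show "cayley_path G A (x # y # zs)"
    unfolding cayley_path_def
  proof (intro conjI allI impI)
    fix i assume i: "Suc i < length (x # y # zs)"
    show "cayley_edge G A ((x # y # zs) ! i) ((x # y # zs) ! Suc i)"
    proof (cases i)
      case 0 then show ?thesis using a by simp
    next
      case (Suc j)
      then have "Suc j < length (y # zs)" using i by simp
      from all[OF this] show ?thesis using Suc by simp
    qed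
  next
    show "x # y # zs \<noteq> []" by simp
    show "set (x # y # zs) \<subseteq> carrier G" using c xc by simp
  qed
qed

lemma path_single: "cayley_path G A [x] \<longleftrightarrow> x \<in> carrier G"
  by (simp add: cayley_path_def)

lemma path_append:
  "cayley_path G A p \<Longrightarrow> cayley_path G A q \<Longrightarrow> last p = hd q \<Longrightarrow> cayley_path G A (p @ tl q)"
proof (induction p rule: induct_list012)
  case 1 then show ?case by (simp add: cayley_path_def)
next
  case (2 x)
  then have "q = x # tl q" using 2 by (cases q) (auto simp: cayley_path_def)
  then show ?case using 2 by simp
next
  case (3 x y zs)
  then have "cayley_edge G A x y" "cayley_path G A (y # zs)" by (simp_all only: path_Cons2)
  moreover have "cayley_path G A ((y # zs) @ tl q)" using 3 calculation by simp
  ultimately show ?case by (simp only: append_Cons path_Cons2)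
qed

lemma cdist_self: "x \<in> carrier G \<Longrightarrow> cdist G A x x \<le> 0"
proof -
  assume "x \<in> carrier G"
  then have "[x] \<in> {xs. cayley_path G A xs \<and> hd xs = x \<and> last xs = x}" by (simp add: path_single)
  then have "cdist G A x x \<le> enat (length [x] - 1)" unfolding cdist_def by (rule INF_lower)
  then show ?thesis by (simp add: zero_enat_def)
qed

lemma in_balls: "S \<subseteq> carrier G \<Longrightarrow> S \<subseteq> out_ball G A 0 S \<and> S \<subseteq> in_ball G A 0 S"
proof -
  assume S: "S \<subseteq> carrier G"
  have "x \<in> out_ball G A 0 S \<and> x \<in> in_ball G A 0 S" if x: "x \<in> S" for x
  proof -
    have c: "x \<in> carrier G" using S x by blast
    have d: "cdist G A x x \<le> 0" using cdist_self[OF c] .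
    show ?thesis unfolding out_ball_def in_ball_def using c x d by blast
  qed
  then show ?thesis by blast
qed

theorem proposition7p3:
  fixes I :: "nat set"
  shows "monoid (M_I I) \<and> finitely_generated (M_I I) \<and> strongly_hyperbolic (M_I I) 0"
proof (intro conjI)
  show "monoid (M_I I)" by (rule monoid_MI)
  show "finitely_generated (M_I I)"
    unfolding finitely_generated_def using finite_gens generates_MI by blast
  show "strongly_hyperbolic (M_I I) 0"
    unfolding strongly_hyperbolic_def
  proof (intro exI conjI allI impI)
    show "finite (gensI I)" by (rule finite_gens)
    show "generates (M_I I) (gensI I)" by (rule generates_MI)
    fix p q r assume t: "geodesic_triangle (M_I I) (gensI I) p q r"
    then have pp: "cayley_path (M_I I) (gensI I) p" and pq: "cayley_path (M_I I) (gensI I) q"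
      and pr: "cayley_path (M_I I) (gensI I) r"
      and j: "last p = hd q" and h: "hd r = hd p" and l: "last r = last q"
      by (auto simp: geodesic_triangle_def geodesic_def)
    have np: "p \<noteq> []" and nq: "q \<noteq> []" using pp pq by (auto simp: cayley_path_def)
    have pa: "cayley_path (M_I I) (gensI I) (p @ tl q)" using path_append[OF pp pq j] .
    have "hd (p @ tl q) = hd r" using np h by simp
    moreover have "last (p @ tl q) = last r"
      using np nq j l by (cases q) (auto simp: last_append)
    ultimately have "p @ tl q = r"
      by (intro path_unique[where f=lenI and G="M_I I" and A="gensI I"] pa pr)
         (simp_all add: edge_len, metis edge_uniq)
    then have req: "r = p @ tl q" by simp
    have "set q \<subseteq> set p \<union> set (tl q)" using nq j np by (cases q) auto
    then have sr: "set r = set p \<union> set q" using req by (cases q) auto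
    have cp: "set p \<subseteq> carrier (M_I I)" and cq: "set q \<subseteq> carrier (M_I I)"
      and cr: "set r \<subseteq> carrier (M_I I)" using pp pq pr by (auto simp: cayley_path_def)
    show "thin_triangle (M_I I) (gensI I) 0 p q r"
      unfolding thin_triangle_def using in_balls[OF cp] in_balls[OF cq] in_balls[OF cr] sr
      by blast
  qed
qed

end
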